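(* Let $\rho_n$ be the number of distinct Manacher arrays of strings of length $n$ and $\sigma_n$ the number of counter arrays of length $n$. Then $\rho_n\le\sigma_n$; more precisely, $\rho_n$ is at most the number of distinct sequences $(c_1,\dots,c_n)$ arising from strings of length $n$, where $c_i$ is the center of the longest palindromic suffix of $S[1..i]$.
   Context: The center of $S[a..b]$ is $(a+b)/2$. The Manacher array of a string $S$ of length $n$ is the array $\mathsf A[1..2n-1]$ where, for $i=2k-1$, $\mathsf A[i]$ is the largest $r\ge 0$ with $1\le k-r$, $k+r\le n$ and $S[k-r..k+r]$ a palindrome, and for $i=2k$, $\mathsf A[i]$ is the largest $r\ge0$ with $1\le k-r+1$, $k+r\le n$ and $S[k-r+1..k+r]$ a palindrome. A counter array of length $n$ is an integer array $(a_1,\dots,a_n)$ with $1\le a_i\le i$ and $a_{i+1}\ge a_i-1$ for $1\le i<n$. *)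

theory Defs
  imports Complex_Main
begin

text \<open>Strings are lists; position j (1-based) of S is S ! (j - 1).
  is_pal S a b: the factor S[a..b] (1-based, inclusive) is a palindrome
  (vacuously true when b < a, i.e. for the empty factor).\<close>
definition is_pal :: "'a list \<Rightarrow> nat \<Rightarrow> nat \<Rightarrow> bool" where
  "is_pal S a b \<longleftrightarrow> (\<forall>j. a \<le> j \<and> j \<le> b \<longrightarrow> S ! (j - 1) = S ! (a + b - j - 1))"

definition manacher_entry :: "'a list \<Rightarrow> nat \<Rightarrow> nat" where
  "manacher_entry S i =
     (let n = length S; k = (i + 1) div 2 in
      if odd i then Max {r. 1 + r \<le> k \<and> k + r \<le> n \<and> is_pal S (k - r) (k + r)}
      else Max {r. r \<le> k \<and> k + r \<le> n \<and> is_pal S (k - r + 1) (k + r)})"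

text \<open>The Manacher array A[1..2n-1] as a list (element i-1 of the list is A[i]).\<close>
definition manacher :: "'a list \<Rightarrow> nat list" where
  "manacher S = map (manacher_entry S) [1..<2 * length S]"

definition lps_start :: "'a list \<Rightarrow> nat \<Rightarrow> nat" where
  "lps_start S i = Min {a. 1 \<le> a \<and> a \<le> i \<and> is_pal S a i}"

definition center_seq :: "'a list \<Rightarrow> real list" where
  "center_seq S = map (\<lambda>i. real (lps_start S i + i) / 2) [1..<length S + 1]"

text \<open>Counter arrays of length n (list element i-1 is a_i).\<close>
definition counter_arrays :: "nat \<Rightarrow> nat list set" where
  "counter_arrays n = {a. length a = n \<and>
       (\<forall>i < n. 1 \<le> a ! i \<and> a ! i \<le> i + 1) \<and>
       (\<forall>i. i + 1 < n \<longrightarrow> a ! (i + 1) \<ge> a ! i - 1)}"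

definition rho :: "'a itself \<Rightarrow> nat \<Rightarrow> nat" where
  "rho _ n = card {manacher (S :: 'a list) | S. length S = n}"

definition num_center_seqs :: "'a itself \<Rightarrow> nat \<Rightarrow> nat" where
  "num_center_seqs _ n = card {center_seq (S :: 'a list) | S. length S = n}"

definition sigma :: "nat \<Rightarrow> nat" where
  "sigma n = card (counter_arrays n)"

end

theory Submission
  imports Defs
begin

lemma pal_mirror:
  assumes P: "is_pal S a r" and "a \<le> l" "l \<le> r"
  shows "is_pal S l r \<longleftrightarrow> is_pal S a (a + r - l)"
proof
  assume L: "is_pal S l r"
  show "is_pal S a (a + r - l)" unfolding is_pal_def
  proof (intro allI impI)
    fix j assume j: "a \<le> j \<and> j \<le> a + r - l"
    define j' where "j' = a + r - j"
    have j': "l \<le> j'" "j' \<le> r" using j assms(2,3) by (auto simp: j'_def)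
    have jr: "a \<le> j \<and> j \<le> r" using j assms(2,3) by linarith
    have e1: "S ! (j - 1) = S ! (j' - 1)"
      using P[unfolded is_pal_def, rule_format, OF jr] by (simp add: j'_def)
    have e2: "S ! (j' - 1) = S ! (l + r - j' - 1)" using L j' unfolding is_pal_def by blast
    have jr2: "a \<le> l + r - j' \<and> l + r - j' \<le> r" using j' assms(2,3) by linarith
    have e3: "S ! (l + r - j' - 1) = S ! (a + r - (l + r - j') - 1)"
      using P[unfolded is_pal_def, rule_format, OF jr2] by simp
    have "a + r - (l + r - j') = a + (a + r - l) - j" using j j' assms(2,3) by (simp add: j'_def)
    then show "S ! (j - 1) = S ! (a + (a + r - l) - j - 1)" using e1 e2 e3 by simp
  qed
next
  assume L: "is_pal S a (a + r - l)"
  show "is_pal S l r" unfolding is_pal_def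
  proof (intro allI impI)
    fix j assume j: "l \<le> j \<and> j \<le> r"
    define j' where "j' = a + r - j"
    have j': "a \<le> j'" "j' \<le> a + r - l" using j assms(2,3) by (auto simp: j'_def)
    have jr: "a \<le> j \<and> j \<le> r" using j assms(2,3) by linarith
    have e1: "S ! (j - 1) = S ! (j' - 1)"
      using P[unfolded is_pal_def, rule_format, OF jr] by (simp add: j'_def)
    have e2: "S ! (j' - 1) = S ! (a + (a + r - l) - j' - 1)" using L j' unfolding is_pal_def by blast
    have e4: "a + (a + r - l) - j' = a + r - (l + r - j)" using j assms(2,3) by (simp add: j'_def)
    have jr2: "a \<le> l + r - j \<and> l + r - j \<le> r" using j assms(2,3) by linarith
    have e3: "S ! (l + r - j - 1) = S ! (a + r - (l + r - j) - 1)"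
      using P[unfolded is_pal_def, rule_format, OF jr2] by simp
    show "S ! (j - 1) = S ! (l + r - j - 1)" using e1 e2 e3 e4 by simp
  qed
qed

lemma lps_props:
  assumes "1 \<le> i"
  shows "1 \<le> lps_start S i \<and> lps_start S i \<le> i \<and> is_pal S (lps_start S i) i"
    and "\<And>a. 1 \<le> a \<Longrightarrow> is_pal S a i \<Longrightarrow> lps_start S i \<le> a"
proof -
  let ?A = "{a. 1 \<le> a \<and> a \<le> i \<and> is_pal S a i}"
  have fin: "finite ?A" by (rule finite_subset[of _ "{..i}"]) auto
  have "i \<in> ?A" using assms by (auto simp: is_pal_def)
  then have ne: "?A \<noteq> {}" by blast
  show "1 \<le> lps_start S i \<and> lps_start S i \<le> i \<and> is_pal S (lps_start S i) i"
    using Min_in[OF fin ne] unfolding lps_start_def by blast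
  fix a assume "1 \<le> a" "is_pal S a i"
  then show "lps_start S i \<le> a"
  proof (cases "a \<le> i")
    case True with \<open>1 \<le> a\<close> \<open>is_pal S a i\<close> show ?thesis
      unfolding lps_start_def by (intro Min_le[OF fin]) auto
  next
    case False
    then show ?thesis using Min_in[OF fin ne] unfolding lps_start_def by auto
  qed
qed

lemma pal_inner: "is_pal S a b \<Longrightarrow> 1 \<le> b \<Longrightarrow> is_pal S (a + 1) (b - 1)"
  unfolding is_pal_def by auto

lemma pal_empty: "r < l \<Longrightarrow> is_pal S l r"
  unfolding is_pal_def by auto

lemma pal_det:
  assumes len: "length S = length T"
    and eq: "\<And>i. 1 \<le> i \<Longrightarrow> i \<le> length S \<Longrightarrow> lps_start S i = lps_start T i"
  shows "1 \<le> l \<Longrightarrow> r \<le> length S \<Longrightarrow> is_pal S l r = is_pal T l r"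
proof (induction r arbitrary: l rule: less_induct)
  case (less r)
  show ?case
  proof (cases "r < l")
    case True then show ?thesis by (simp add: pal_empty)
  next
    case False
    then have r1: "1 \<le> r" using less.prems by simp
    define a where "a = lps_start S r"
    have aT: "a = lps_start T r" using eq[OF r1 less.prems(2)] a_def by simp
    note pS = lps_props[where S=S, OF r1, folded a_def]
    note pT = lps_props[where S=T, OF r1, folded aT]
    consider "l < a" | "l = a" | "a < l" by linarith
    then show ?thesis
    proof cases
      case 1 then show ?thesis using pS(2)[of l] pT(2)[of l] less.prems by fastforce
    next
      case 2 then show ?thesis using pS pT by simp
    next
      case 3
      have "is_pal S l r = is_pal S a (a + r - l)" using pal_mirror[of S a r l] pS 3 False by simp
      moreover have "is_pal T l r = is_pal T a (a + r - l)" using pal_mirror[of T a r l] pT 3 False by simp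
      moreover have "is_pal S a (a + r - l) = is_pal T a (a + r - l)"
        using less.IH[of "a + r - l" a] 3 False pS less.prems by simp
      ultimately show ?thesis by simp
    qed
  qed
qed

lemma manacher_det:
  assumes len: "length S = length T"
    and eq: "\<And>i. 1 \<le> i \<Longrightarrow> i \<le> length S \<Longrightarrow> lps_start S i = lps_start T i"
  shows "manacher S = manacher T"
proof -
  have P: "\<And>l r. 1 \<le> l \<Longrightarrow> r \<le> length S \<Longrightarrow> is_pal S l r = is_pal T l r"
    using pal_det[OF len eq] by blast
  have "manacher_entry S i = manacher_entry T i" for i
  proof -
    let ?k = "(i + 1) div 2"
    have e1: "{r. 1 + r \<le> ?k \<and> ?k + r \<le> length S \<and> is_pal S (?k - r) (?k + r)}
        = {r. 1 + r \<le> ?k \<and> ?k + r \<le> length T \<and> is_pal T (?k - r) (?k + r)}"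
      using P len by auto
    have e2: "{r. r \<le> ?k \<and> ?k + r \<le> length S \<and> is_pal S (?k - r + 1) (?k + r)}
        = {r. r \<le> ?k \<and> ?k + r \<le> length T \<and> is_pal T (?k - r + 1) (?k + r)}"
      using P len by auto
    show ?thesis unfolding manacher_entry_def Let_def by (subst e1, subst e2, rule refl)
  qed
  then show ?thesis unfolding manacher_def using len by simp
qed

lemma card_transfer:
  assumes fin: "finite {f S | S. P S}"
    and det: "\<And>S T. P S \<Longrightarrow> P T \<Longrightarrow> f S = f T \<Longrightarrow> g S = g T"
  shows "card {g S | S. P S} \<le> card {f S | S. P S} \<and> finite {g S | S. P S}"
proof -
  define h where "h y = g (SOME S. P S \<and> f S = y)" for y
  have "{g S | S. P S} = h ` {f S | S. P S}"
  proof (intro equalityI subsetI)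
    fix x assume "x \<in> {g S | S. P S}"
    then obtain S where S: "P S" "x = g S" by blast
    have ex: "\<exists>T. P T \<and> f T = f S" using S by blast
    have "P (SOME T. P T \<and> f T = f S) \<and> f (SOME T. P T \<and> f T = f S) = f S"
      by (rule someI_ex[OF ex])
    then have "h (f S) = g S" unfolding h_def using det S by metis
    moreover have "f S \<in> {f S | S. P S}" using S by blast
    ultimately show "x \<in> h ` {f S | S. P S}" using S(2) by (metis image_eqI)
  next
    fix x assume "x \<in> h ` {f S | S. P S}"
    then obtain S where S: "P S" "x = h (f S)" by blast
    have ex: "\<exists>T. P T \<and> f T = f S" using S by blast
    have "P (SOME T. P T \<and> f T = f S) \<and> f (SOME T. P T \<and> f T = f S) = f S"
      by (rule someI_ex[OF ex])
    then show "x \<in> {g S | S. P S}" unfolding S h_def by blast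
  qed
  then show ?thesis using card_image_le[OF fin, of h] fin by simp
qed

definition lpsmap :: "'a list \<Rightarrow> nat list" where
  "lpsmap S = map (lps_start S) [1..<length S + 1]"

lemma lpsmap_counter: "lpsmap S \<in> counter_arrays (length S)"
proof -
  let ?n = "length S"
  have nth: "\<And>i. i < ?n \<Longrightarrow> lpsmap S ! i = lps_start S (i + 1)"
    unfolding lpsmap_def by (simp add: nth_map_upt add.commute del: upt_Suc)
  have A: "\<forall>i < ?n. 1 \<le> lpsmap S ! i \<and> lpsmap S ! i \<le> i + 1"
    using nth lps_props(1) by (metis le_add2)
  have B: "lpsmap S ! (i + 1) \<ge> lpsmap S ! i - 1" if i: "i + 1 < ?n" for i
  proof (rule ccontr)
    assume c: "\<not> ?thesis"
    define a where "a = lps_start S (i + 1)"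
    define b where "b = lps_start S (i + 2)"
    have c': "b + 1 < a" using c nth[of i] nth[of "i+1"] i unfolding a_def b_def by simp
    have pb: "1 \<le> b \<and> b \<le> i + 2 \<and> is_pal S b (i + 2)" using lps_props(1)[of "i+2" S] b_def by simp
    have "is_pal S (b + 1) (i + 1)" using pal_inner[of S b "i+2"] pb by simp
    then have "a \<le> b + 1" using lps_props(2)[of "i+1" "b+1" S] a_def by simp
    then show False using c' by simp
  qed
  have "length (lpsmap S) = ?n" by (simp add: lpsmap_def del: upt_Suc)
  then show ?thesis unfolding counter_arrays_def using A B by simp
qed

lemma finite_counter: "finite (counter_arrays n)"
proof -
  have "counter_arrays n \<subseteq> {xs. set xs \<subseteq> {..n} \<and> length xs = n}"
  proof
    fix xs assume "xs \<in> counter_arrays n"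
    then have L: "length xs = n" "\<forall>i < n. xs ! i \<le> i + 1" unfolding counter_arrays_def by auto
    have "set xs \<subseteq> {..n}"
    proof
      fix y assume "y \<in> set xs"
      then obtain i where "i < n" "y = xs ! i" using L(1) by (auto simp: in_set_conv_nth)
      then show "y \<in> {..n}" using L(2) by fastforce
    qed
    then show "xs \<in> {xs. set xs \<subseteq> {..n} \<and> length xs = n}" using L(1) by blast
  qed
  then show ?thesis using finite_lists_length_eq[of "{..n}" n] finite_subset by auto
qed

lemma center_lps:
  assumes "length S = length T" "center_seq S = center_seq T"
  shows "lpsmap S = lpsmap T"
proof (rule nth_equalityI)
  show "length (lpsmap S) = length (lpsmap T)" using assms by (simp add: lpsmap_def)
  fix i assume "i < length (lpsmap S)"
  then have i: "i < length S" by (simp add: lpsmap_def del: upt_Suc)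
  have "center_seq S ! i = center_seq T ! i" using assms by simp
  then have "real (lps_start S (i+1) + (i+1)) / 2 = real (lps_start T (i+1) + (i+1)) / 2"
    using i assms(1) unfolding center_seq_def by (simp add: nth_map_upt add.commute del: upt_Suc)
  then have "lps_start S (i+1) = lps_start T (i+1)" by simp
  then show "lpsmap S ! i = lpsmap T ! i" using i assms(1) unfolding lpsmap_def by (simp add: nth_map_upt add.commute del: upt_Suc)
qed

lemma lps_center:
  assumes "length S = length T" "lpsmap S = lpsmap T"
  shows "center_seq S = center_seq T"
proof (rule nth_equalityI)
  show "length (center_seq S) = length (center_seq T)" using assms by (simp add: center_seq_def)
  fix i assume "i < length (center_seq S)"
  then have i: "i < length S" by (simp add: center_seq_def del: upt_Suc)
  have "lpsmap S ! i = lpsmap T ! i" using assms by simp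
  then have "lps_start S (i+1) = lps_start T (i+1)"
    using i assms(1) unfolding lpsmap_def by (simp add: nth_map_upt add.commute del: upt_Suc)
  then show "center_seq S ! i = center_seq T ! i" using i assms(1) unfolding center_seq_def by (simp add: nth_map_upt add.commute del: upt_Suc)
qed

lemma lps_manacher:
  assumes "length S = length T" "lpsmap S = lpsmap T"
  shows "manacher S = manacher T"
proof (rule manacher_det[OF assms(1)])
  fix i assume i: "1 \<le> i" "i \<le> length S"
  have "lpsmap S ! (i - 1) = lpsmap T ! (i - 1)" using assms by simp
  then show "lps_start S i = lps_start T i"
    using i assms(1) unfolding lpsmap_def by (simp add: nth_map_upt del: upt_Suc)
qed

theorem corollary3p6:
  "rho TYPE('a) n \<le> num_center_seqs TYPE('a) n \<and> rho TYPE('a) n \<le> sigma n"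
proof -
  let ?P = "\<lambda>S :: 'a list. length S = n"
  have Hsub: "{lpsmap S | S. ?P S} \<subseteq> counter_arrays n" using lpsmap_counter by blast
  then have finH: "finite {lpsmap S | S. ?P S}" using finite_counter finite_subset by blast
  have cH: "card {lpsmap S | S. ?P S} \<le> sigma n"
    unfolding sigma_def by (rule card_mono[OF finite_counter Hsub])
  have c1: "card {center_seq S | S. ?P S} \<le> card {lpsmap S | S. ?P S} \<and> finite {center_seq S | S. ?P S}"
    by (rule card_transfer[OF finH]) (auto intro: lps_center)
  have c2: "card {manacher S | S. ?P S} \<le> card {center_seq S | S. ?P S}"
    using card_transfer[of center_seq ?P manacher] c1 center_lps lps_manacher by (metis (mono_tags, lifting))
  show ?thesis unfolding rho_def num_center_seqs_def using c1 c2 cH by simp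
qed

end
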